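(* Let $\Delta$ be the maximum degree of an anonymous graph (assumed even), $D$ the length of a shortest path from the agent's start node $s$ to the treasure $t$, and $\delta=\cos^2\!\left(\frac{\pi}{2\Delta}\right)$. There exists a randomized strategy, using at most one quantum pebble at each node and a total of $D$ quantum pebbles, with which an oblivious agent finds the treasure in $D$ steps with high probability; the agent needs to make $O\big((\log D+\log\Delta)/\log(1/\delta)\big)$ measurements at each node. In this strategy the oracle places, at each node of a shortest $s$–$t$ path other than $t$, a quantum pebble emitting the state $f(p)$ where $p\in\{1,\dots,\Delta\}$ is the port number of the next path edge, $f(2i+1)=|i_+\rangle$, $f(2i+2)=|i_-\rangle$ for $i\in\{0,\dots,\Delta/2-1\}$, with $|i_\pm\rangle=\frac1{\sqrt2}(|0\rangle\pm e^{\mathrm{i}\, i\pi/\Delta}|1\rangle)$; the agent measures $n$ emitted qubits in each basis $M(j)=\{|j_+\rangle,|j_-\rangle\}$, $j=0,\dots,\Delta/2-1$, and follows the port $f^{-1}$ of the outcome observed most often. Here $\delta$ serves as an upper bound on the probability of observing a given outcome $j_\pm$ when a state $|k_\pm\rangle$ with $k\ne j$ is measured in $M(j)$.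
   Context: Anonymous graph: connected simple undirected graph with unlabelled, indistinguishable nodes; the edges at each node $v$ carry distinct local port numbers (here numbered $1,\dots,\deg(v)$). An agent starts at $s$ and must reach the stationary treasure $t$. In each round it observes its current node (degree and the quantum pebble there, if any), computes, and traverses at most one edge; it is oblivious, i.e. it has no memory of previous rounds. A quantum pebble is a source placed at a node by an oracle (which knows the instance) that repeatedly emits qubits all in the same quantum state, unknown to the agent; the agent may perform projective single-qubit measurements in any chosen orthonormal basis on as many copies as it wishes. "High probability" means the probability of reaching the treasure in $D$ steps tends to $1$. *)

theory Defs
  imports "HOL-Probability.Probability"
begin

text \<open>A (pure) qubit state is a vector (a,b) in C^2, standing for a|0> + b|1>.\<close>
type_synonym qubit = "complex \<times> complex"

definition inner_q :: "qubit \<Rightarrow> qubit \<Rightarrow> complex" where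
  "inner_q a b = cnj (fst a) * fst b + cnj (snd a) * snd b"

definition born :: "qubit \<Rightarrow> qubit \<Rightarrow> real" where
  "born phi psi = (cmod (inner_q phi psi))\<^sup>2"

definition ket_plus :: "nat \<Rightarrow> nat \<Rightarrow> qubit" where
  "ket_plus Delta i = (complex_of_real (1 / sqrt 2),
      exp (\<i> * complex_of_real (real i * pi / real Delta)) / complex_of_real (sqrt 2))"

definition ket_minus :: "nat \<Rightarrow> nat \<Rightarrow> qubit" where
  "ket_minus Delta i = (complex_of_real (1 / sqrt 2),
      - exp (\<i> * complex_of_real (real i * pi / real Delta)) / complex_of_real (sqrt 2))"

definition f_state :: "nat \<Rightarrow> nat \<Rightarrow> qubit" where
  "f_state Delta p = (if odd p then ket_plus Delta ((p - 1) div 2) else ket_minus Delta ((p - 2) div 2))"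

definition delta :: "nat \<Rightarrow> real" where
  "delta Delta = (cos (pi / (2 * real Delta)))\<^sup>2"

text \<open>For each basis j < Delta/2, the agent measures n qubits in M(j); c j is the number of
  outcomes j_+ (so n - c j outcomes j_-). Outcome j_+ corresponds to port 2j+1, j_- to 2j+2.\<close>
definition outcome_count :: "nat \<Rightarrow> (nat \<Rightarrow> nat) \<Rightarrow> nat \<Rightarrow> nat" where
  "outcome_count n c p = (if odd p then c ((p - 1) div 2) else n - c ((p - 2) div 2))"

text \<open>Port f^{-1} of the outcome observed most often (ties broken by the smallest port).\<close>
definition decide :: "nat \<Rightarrow> nat \<Rightarrow> (nat \<Rightarrow> nat) \<Rightarrow> nat" where
  "decide Delta n c = (LEAST p. p \<in> {1..Delta} \<and>
      (\<forall>q\<in>{1..Delta}. outcome_count n c q \<le> outcome_count n c p))"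

definition counts_pmf :: "nat \<Rightarrow> nat \<Rightarrow> qubit \<Rightarrow> (nat \<Rightarrow> nat) pmf" where
  "counts_pmf Delta n psi =
     Pi_pmf {..< Delta div 2} 0 (\<lambda>j. binomial_pmf n (born (ket_plus Delta j) psi))"

definition agent_choice :: "nat \<Rightarrow> nat \<Rightarrow> qubit \<Rightarrow> nat pmf" where
  "agent_choice Delta n psi = map_pmf (decide Delta n) (counts_pmf Delta n psi)"

definition simple_graph :: "'v set \<Rightarrow> ('v \<Rightarrow> 'v \<Rightarrow> bool) \<Rightarrow> bool" where
  "simple_graph V E \<longleftrightarrow> finite V \<and> (\<forall>u v. E u v \<longrightarrow> u \<in> V \<and> v \<in> V)
     \<and> (\<forall>u v. E u v \<longrightarrow> E v u) \<and> (\<forall>v. \<not> E v v)"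

definition is_walk :: "('v \<Rightarrow> 'v \<Rightarrow> bool) \<Rightarrow> 'v list \<Rightarrow> bool" where
  "is_walk E P \<longleftrightarrow> P \<noteq> [] \<and> (\<forall>i. Suc i < length P \<longrightarrow> E (P ! i) (P ! Suc i))"

definition connected_graph :: "'v set \<Rightarrow> ('v \<Rightarrow> 'v \<Rightarrow> bool) \<Rightarrow> bool" where
  "connected_graph V E \<longleftrightarrow> (\<forall>u\<in>V. \<forall>v\<in>V. \<exists>P. is_walk E P \<and> hd P = u \<and> last P = v)"

definition deg :: "('v \<Rightarrow> 'v \<Rightarrow> bool) \<Rightarrow> 'v \<Rightarrow> nat" where
  "deg E v = card {u. E v u}"

definition max_degree :: "'v set \<Rightarrow> ('v \<Rightarrow> 'v \<Rightarrow> bool) \<Rightarrow> nat" where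
  "max_degree V E = Max (deg E ` V)"

text \<open>port v p is the neighbour of v reached via local port p, 1 <= p <= deg v.\<close>
definition port_numbering :: "'v set \<Rightarrow> ('v \<Rightarrow> 'v \<Rightarrow> bool) \<Rightarrow> ('v \<Rightarrow> nat \<Rightarrow> 'v) \<Rightarrow> bool" where
  "port_numbering V E port \<longleftrightarrow> (\<forall>v\<in>V. bij_betw (port v) {1..deg E v} {u. E v u})"

definition port_of :: "('v \<Rightarrow> 'v \<Rightarrow> bool) \<Rightarrow> ('v \<Rightarrow> nat \<Rightarrow> 'v) \<Rightarrow> 'v \<Rightarrow> 'v \<Rightarrow> nat" where
  "port_of E port v u = (THE p. p \<in> {1..deg E v} \<and> port v p = u)"

definition graph_dist :: "('v \<Rightarrow> 'v \<Rightarrow> bool) \<Rightarrow> 'v \<Rightarrow> 'v \<Rightarrow> nat" where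
  "graph_dist E s t = (LEAST d. \<exists>P. is_walk E P \<and> hd P = s \<and> last P = t \<and> length P = Suc d)"

definition shortest_path :: "('v \<Rightarrow> 'v \<Rightarrow> bool) \<Rightarrow> 'v \<Rightarrow> 'v \<Rightarrow> 'v list \<Rightarrow> bool" where
  "shortest_path E s t P \<longleftrightarrow> is_walk E P \<and> hd P = s \<and> last P = t
     \<and> length P = Suc (graph_dist E s t)"

text \<open>At each node P!i (i < D) of the path, a pebble emitting f(p), p the port to P!(i+1).\<close>
definition pebbles :: "('v \<Rightarrow> 'v \<Rightarrow> bool) \<Rightarrow> ('v \<Rightarrow> nat \<Rightarrow> 'v) \<Rightarrow> nat \<Rightarrow> 'v list \<Rightarrow> 'v \<Rightarrow> qubit option" where
  "pebbles E port Delta P v =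
     (if v \<in> set (butlast P)
      then Some (f_state Delta (port_of E port v
              (P ! Suc (THE i. Suc i < length P \<and> P ! i = v))))
      else None)"

text \<open>One round: at a node with a pebble the agent measures and follows the chosen port
  (staying put if that port does not exist); at a node without pebble it stays.\<close>
definition agent_step :: "('v \<Rightarrow> 'v \<Rightarrow> bool) \<Rightarrow> ('v \<Rightarrow> nat \<Rightarrow> 'v) \<Rightarrow> nat \<Rightarrow> nat
    \<Rightarrow> ('v \<Rightarrow> qubit option) \<Rightarrow> 'v \<Rightarrow> 'v pmf" where
  "agent_step E port Delta n peb v =
     (case peb v of
        None \<Rightarrow> return_pmf v
      | Some psi \<Rightarrow> map_pmf (\<lambda>p. if 1 \<le> p \<and> p \<le> deg E v then port v p else v)
                     (agent_choice Delta n psi))"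

fun walk_pmf :: "('v \<Rightarrow> 'v pmf) \<Rightarrow> nat \<Rightarrow> 'v \<Rightarrow> 'v pmf" where
  "walk_pmf step 0 v = return_pmf v"
| "walk_pmf step (Suc k) v = bind_pmf (walk_pmf step k v) step"

end

theory Submission
  imports Defs
begin

lemma exp_cis: "exp (\<i> * complex_of_real x) = cis x"
  by (simp add: cis_conv_exp mult.commute)

lemma born_gen:
  assumes "s = 1 \<or> s = -1"
  shows "born (complex_of_real (1 / sqrt 2), cis a / complex_of_real (sqrt 2))
              (complex_of_real (1 / sqrt 2), of_real s * cis b / complex_of_real (sqrt 2))
     = (1 + s * cos (b - a)) / 2"
proof -
  have "inner_q (complex_of_real (1 / sqrt 2), cis a / complex_of_real (sqrt 2))
              (complex_of_real (1 / sqrt 2), of_real s * cis b / complex_of_real (sqrt 2))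
        = (1 + of_real s * cis (b - a)) / 2"
    unfolding inner_q_def
    by (simp add: field_simps cis_mult[symmetric] cis_cnj flip: of_real_mult)
       (simp add: cis_mult cis_divide)
  hence "born (complex_of_real (1 / sqrt 2), cis a / complex_of_real (sqrt 2))
              (complex_of_real (1 / sqrt 2), of_real s * cis b / complex_of_real (sqrt 2))
       = (cmod ((1 + of_real s * cis (b - a)) / 2))\<^sup>2" unfolding born_def by (rule arg_cong)
  also have "\<dots> = ((1 + s * cos (b-a))/2)^2 + (s * sin (b-a) / 2)^2"
  proof -
    have "(cmod (1 + of_real s * cis (b - a)))^2 = (1 + s * cos (b-a))^2 + (s * sin (b-a))^2"
      by (simp add: cmod_power2)
    thus ?thesis by (simp add: norm_divide power_divide)
  qed
  also have "\<dots> = (1 + s * cos (b - a)) / 2"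
  proof -
    have h: "sin (b-a) * sin (b-a) + cos (b-a) * cos (b-a) = 1"
      using sin_cos_squared_add[of "b-a"] by (simp add: power2_eq_square)
    show ?thesis using assms by (auto simp: power2_eq_square field_simps) (use h in linarith)+
  qed
  finally show ?thesis .
qed


definition kb :: "nat \<Rightarrow> nat" where "kb p = (if odd p then (p - 1) div 2 else (p - 2) div 2)"
definition sg :: "nat \<Rightarrow> real" where "sg p = (if odd p then 1 else -1)"

lemma f_state_eq: "f_state Delta p = (complex_of_real (1 / sqrt 2),
   of_real (sg p) * cis (real (kb p) * pi / real Delta) / complex_of_real (sqrt 2))"
  unfolding f_state_def ket_plus_def ket_minus_def exp_cis kb_def sg_def
  by auto

lemma ket_plus_eq: "ket_plus Delta j = (complex_of_real (1 / sqrt 2),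
   cis (real j * pi / real Delta) / complex_of_real (sqrt 2))"
  unfolding ket_plus_def exp_cis by simp

lemma born_f: "born (ket_plus Delta j) (f_state Delta p)
   = (1 + sg p * cos ((real (kb p) - real j) * pi / real Delta)) / 2"
  unfolding f_state_eq ket_plus_eq
  by (subst born_gen) (auto simp: sg_def diff_divide_distrib left_diff_distrib)

lemma delta_eq: "delta Delta = (1 + cos (pi / real Delta)) / 2"
proof -
  have "cos (pi / real Delta) = cos (2 * (pi / (2 * real Delta)))" by simp
  also have "\<dots> = 2 * (cos (pi / (2 * real Delta)))\<^sup>2 - 1" by (rule cos_double_cos)
  finally show ?thesis unfolding delta_def by simp
qed

lemma cos_bound:
  assumes "j < Delta div 2" "k < Delta div 2" "j \<noteq> k"
  shows "\<bar>cos ((real k - real j) * pi / real Delta)\<bar> \<le> cos (pi / real Delta)"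
proof -
  define d where "d = \<bar>real k - real j\<bar>"
  have D: "real Delta \<ge> 2" using assms by linarith
  have d1: "1 \<le> d" using assms(3) unfolding d_def by (cases "j < k") auto
  have "real (Delta div 2) \<le> real Delta / 2" by linarith
  hence d2: "d \<le> real Delta / 2 - 1" using assms unfolding d_def by linarith
  have eq: "cos ((real k - real j) * pi / real Delta) = cos (d * pi / real Delta)"
    unfolding d_def by (metis abs_divide abs_mult abs_of_nonneg cos_abs_real pi_ge_zero of_nat_0_le_iff)
  have p0: "0 \<le> pi / real Delta" using D by simp
  have p1: "pi / real Delta \<le> d * pi / real Delta"
    using d1 D by (simp add: divide_right_mono)
  have "d * pi / real Delta \<le> (real Delta / 2) * pi / real Delta"
    using d2 D by (intro divide_right_mono mult_right_mono) auto
  also have "\<dots> = pi / 2" using D by simp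
  finally have p2: "d * pi / real Delta \<le> pi / 2" .
  have c0: "cos (d * pi / real Delta) \<ge> 0" using p0 p1 p2 pi_gt_zero by (intro cos_ge_zero) linarith+
  have c1: "cos (d * pi / real Delta) \<le> cos (pi / real Delta)"
    using p0 p1 p2 pi_gt_zero by (intro cos_monotone_0_pi_le) linarith+
  show ?thesis using eq c0 c1 by simp
qed



lemma kb_odd: "kb (2 * m + 1) = m" unfolding kb_def by simp
lemma kb_even: "kb (2 * m + 2) = m" unfolding kb_def by simp
lemma kb_odd': "kb (Suc (2 * m)) = m" unfolding kb_def by simp
lemma kb_even': "kb (Suc (Suc (2 * m))) = m" unfolding kb_def by simp

lemma nat_cases_pos: assumes "1 \<le> (p::nat)" obtains m where "p = 2 * m + 1" | m where "p = 2 * m + 2"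
proof (cases "odd p")
  case True then obtain m where "p = 2 * m + 1" by (blast elim: oddE)
  thus ?thesis using that by blast
next
  case False then obtain m where m: "p = 2 * m" by (blast elim: evenE)
  with assms have "m \<ge> 1" by simp
  then obtain m' where "m = Suc m'" by (cases m) auto
  with m have "p = 2 * m' + 2" by simp
  thus ?thesis using that by blast
qed

lemma kb_lt: assumes "even Delta" "1 \<le> p" "p \<le> Delta" shows "kb p < Delta div 2"
proof -
  obtain d where d: "Delta = 2 * d" using assms(1) by (blast elim: evenE)
  show ?thesis using assms(2)
    by (rule nat_cases_pos) (use assms(3) d in \<open>auto simp: kb_odd kb_even kb_odd' kb_even'\<close>)
qed

lemma kb_inj: assumes "1 \<le> p" "1 \<le> q" "kb p = kb q" "odd p = odd q" shows "p = q"
  using assms(1)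
proof (rule nat_cases_pos)
  fix m assume pm: "p = 2 * m + 1"
  show "p = q" using assms(2)
    by (rule nat_cases_pos) (use assms pm in \<open>auto simp: kb_odd kb_even kb_odd' kb_even'\<close>)
next
  fix m assume pm: "p = 2 * m + 2"
  show "p = q" using assms(2)
    by (rule nat_cases_pos) (use assms pm in \<open>auto simp: kb_odd kb_even kb_odd' kb_even'\<close>)
qed

lemma oc_kb: "outcome_count n c q = (if odd q then c (kb q) else n - c (kb q))"
  unfolding outcome_count_def kb_def by simp

lemma decide_eq:
  assumes ev: "even Delta" and p: "1 \<le> p" "p \<le> Delta" and n: "n \<ge> 1"
    and le: "\<forall>j<Delta div 2. c j \<le> n"
    and ck1: "odd p \<longrightarrow> c (kb p) = n" and ck0: "even p \<longrightarrow> c (kb p) = 0"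
    and good: "\<forall>j<Delta div 2. j \<noteq> kb p \<longrightarrow> c j \<noteq> 0 \<and> c j \<noteq> n"
  shows "decide Delta n c = p"
proof -
  have ocp: "outcome_count n c p = n" using ck1 ck0 by (auto simp: oc_kb)
  have lt: "outcome_count n c q < n" if q: "q \<in> {1..Delta}" "q \<noteq> p" for q
  proof (cases "kb q = kb p")
    case True
    hence "odd q \<noteq> odd p" using kb_inj[of p q] q p by auto
    thus ?thesis using True ck1 ck0 n by (auto simp: oc_kb)
  next
    case False
    have "kb q < Delta div 2" using kb_lt[OF ev] q by auto
    hence "c (kb q) \<noteq> 0 \<and> c (kb q) \<noteq> n \<and> c (kb q) \<le> n" using good le False by auto
    thus ?thesis by (auto simp: oc_kb)
  qed
  show ?thesis unfolding decide_def
  proof (rule Least_equality)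
    show "p \<in> {1..Delta} \<and> (\<forall>q\<in>{1..Delta}. outcome_count n c q \<le> outcome_count n c p)"
      using p ocp lt by fastforce
  next
    fix y assume "y \<in> {1..Delta} \<and> (\<forall>q\<in>{1..Delta}. outcome_count n c q \<le> outcome_count n c y)"
    hence "y = p" using lt[of y] p ocp by (metis atLeastAtMost_iff less_le_not_le)
    thus "p \<le> y" by simp
  qed
qed

lemma born_range: "born (ket_plus Delta j) (f_state Delta p) \<in> {0..1}"
proof -
  have "\<bar>sg p * cos ((real (kb p) - real j) * pi / real Delta)\<bar> \<le> 1"
    by (auto simp: sg_def abs_mult)
  thus ?thesis unfolding born_f by (auto simp: abs_le_iff)
qed

lemma choice_bound:
  assumes ev: "even Delta" and D2: "Delta \<ge> 2" and p: "1 \<le> p" "p \<le> Delta" and n: "n \<ge> 1"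
  shows "pmf (agent_choice Delta n (f_state Delta p)) p \<ge> 1 - 2 * real Delta * delta Delta ^ n"
proof -
  define A where "A = {..<Delta div 2}"
  define k where "k = kb p"
  define q where "q = (\<lambda>j. born (ket_plus Delta j) (f_state Delta p))"
  define M where "M = counts_pmf Delta n (f_state Delta p)"
  have M: "M = Pi_pmf A 0 (\<lambda>j. binomial_pmf n (q j))"
    unfolding M_def counts_pmf_def A_def q_def ..
  have fA: "finite A" unfolding A_def by simp
  have kA: "k \<in> A" using kb_lt[OF ev p] unfolding A_def k_def by simp
  have q01: "0 \<le> q j" "q j \<le> 1" for j using born_range unfolding q_def by auto
  have qk: "q k = (if odd p then 1 else 0)"
    unfolding q_def born_f k_def by (simp add: sg_def)
  define bad where "bad = (\<Union>j\<in>A - {k}. {c::nat\<Rightarrow>nat. c j = 0 \<or> c j = n})"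
  have setM: "set_pmf M = PiE_dflt A 0 (set_pmf \<circ> (\<lambda>j. binomial_pmf n (q j)))"
    unfolding M by (rule set_Pi_pmf[OF fA])
  have dec: "decide Delta n c = p" if c: "c \<in> set_pmf M" "c \<notin> bad" for c
  proof (rule decide_eq[OF ev p n])
    have cin: "c j \<in> set_pmf (binomial_pmf n (q j))" if "j \<in> A" for j
      using c(1) that unfolding setM PiE_dflt_def by auto
    show "\<forall>j<Delta div 2. c j \<le> n"
    proof (intro allI impI)
      fix j assume "j < Delta div 2"
      hence "c j \<in> set_pmf (binomial_pmf n (q j))" using cin A_def by auto
      thus "c j \<le> n" using q01[of j] by (subst (asm) set_pmf_binomial_eq) (auto split: if_splits)
    qed
    show "odd p \<longrightarrow> c (kb p) = n" "even p \<longrightarrow> c (kb p) = 0"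
      using cin[OF kA] qk unfolding k_def by auto
    show "\<forall>j<Delta div 2. j \<noteq> kb p \<longrightarrow> c j \<noteq> 0 \<and> c j \<noteq> n"
      using c(2) unfolding bad_def A_def k_def by auto
  qed
  have qb: "q j \<le> delta Delta \<and> 1 - q j \<le> delta Delta" if j: "j \<in> A - {k}" for j
  proof -
    define x where "x = cos ((real k - real j) * pi / real Delta)"
    define C where "C = cos (pi / real Delta)"
    have "\<bar>x\<bar> \<le> C"
      using j kA unfolding A_def x_def C_def by (intro cos_bound) auto
    moreover have "q j = (1 + sg p * x) / 2" unfolding q_def born_f x_def k_def ..
    moreover have "delta Delta = (1 + C) / 2" unfolding C_def by (rule delta_eq)
    moreover have "sg p = 1 \<or> sg p = -1" unfolding sg_def by auto
    ultimately show ?thesis by (auto simp: abs_le_iff)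
  qed
  have single: "measure_pmf.prob M {c. c j = 0 \<or> c j = n} \<le> 2 * delta Delta ^ n"
    if j: "j \<in> A - {k}" for j
  proof -
    have "measure_pmf.prob M {c. c j = 0 \<or> c j = n}
        = measure_pmf.prob (map_pmf (\<lambda>c. c j) M) {0, n}"
      by (simp add: measure_map_pmf vimage_def)
    also have "map_pmf (\<lambda>c. c j) M = binomial_pmf n (q j)"
      unfolding M using Pi_pmf_component[OF fA, of j 0 "\<lambda>j. binomial_pmf n (q j)"] j by simp
    also have "measure_pmf.prob (binomial_pmf n (q j)) {0, n}
        = pmf (binomial_pmf n (q j)) 0 + pmf (binomial_pmf n (q j)) n"
      using n by (subst measure_measure_pmf_finite) auto
    also have "\<dots> = (1 - q j) ^ n + q j ^ n" using q01[of j] by simp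
    also have "\<dots> \<le> delta Delta ^ n + delta Delta ^ n"
      using qb[OF j] q01[of j] by (intro add_mono power_mono) auto
    finally show ?thesis by simp
  qed
  have "measure_pmf.prob M bad \<le> (\<Sum>j\<in>A - {k}. measure_pmf.prob M {c. c j = 0 \<or> c j = n})"
    unfolding bad_def using fA by (intro measure_pmf.finite_measure_subadditive_finite) auto
  also have "\<dots> \<le> real (card (A - {k})) * (2 * delta Delta ^ n)"
    using single by (intro sum_bounded_above) auto
  also have "\<dots> \<le> real Delta * (2 * delta Delta ^ n)"
  proof (intro mult_right_mono)
    have "card (A - {k}) \<le> card A" using fA by (intro card_mono) auto
    also have "\<dots> \<le> Delta" unfolding A_def by simp
    finally show "real (card (A - {k})) \<le> real Delta" by simp
    show "0 \<le> 2 * delta Delta ^ n" unfolding delta_def by simp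
  qed
  finally have bad_le: "measure_pmf.prob M bad \<le> 2 * real Delta * delta Delta ^ n" by simp
  have "measure_pmf.prob M (- bad) \<le> measure_pmf.prob M (decide Delta n -` {p})"
    using dec by (intro measure_pmf.finite_measure_mono_AE) (auto simp: AE_measure_pmf_iff)
  moreover have "measure_pmf.prob M (- bad) = 1 - measure_pmf.prob M bad"
    using measure_pmf.prob_compl[of bad M] by (simp add: Compl_eq_Diff_UNIV)
  moreover have "pmf (agent_choice Delta n (f_state Delta p)) p = measure_pmf.prob M (decide Delta n -` {p})"
    unfolding agent_choice_def M_def by (simp add: pmf_map)
  ultimately show ?thesis using bad_le by linarith
qed



lemma delta_props: assumes "Delta \<ge> 2" shows "1/2 \<le> delta Delta" "delta Delta < 1"
proof -
  have D: "real Delta \<ge> 2" using assms by simp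
  have p0: "0 < pi / real Delta" using D by simp
  have "pi / real Delta \<le> pi / 2" using D by (intro divide_left_mono) auto
  hence "cos (pi / real Delta) \<ge> 0" using p0 pi_gt_zero by (intro cos_ge_zero) linarith+
  thus "1/2 \<le> delta Delta" unfolding delta_eq by simp
  have "cos (pi / real Delta) < cos 0"
    using p0 \<open>pi / real Delta \<le> pi / 2\<close> pi_gt_zero by (intro cos_monotone_0_pi) linarith+
  thus "delta Delta < 1" unfolding delta_eq by simp
qed

definition nm :: "nat \<Rightarrow> nat \<Rightarrow> nat" where
  "nm D Delta = nat \<lceil>2 * ln (real D * real Delta) / ln (1 / delta Delta)\<rceil>"

lemma nm_props:
  assumes D: "D \<ge> 1" and De: "Delta \<ge> 2"
  shows "nm D Delta \<ge> 1"
    "real (nm D Delta) \<le> 3 * (ln (real D) + ln (real Delta)) / ln (1 / delta Delta)"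
    "2 * real Delta * delta Delta ^ nm D Delta \<le> 1 / (real D)^2"
proof -
  define d where "d = delta Delta"
  define L where "L = ln (1 / d)"
  define x where "x = 2 * ln (real D * real Delta) / L"
  have d1: "1/2 \<le> d" "d < 1" using delta_props[OF De] unfolding d_def by auto
  have L0: "0 < L" unfolding L_def using d1 by simp
  have L2: "L \<le> ln 2" unfolding L_def using d1 by (subst ln_le_cancel_iff) (auto simp: field_simps)
  have DD: "real D * real Delta \<ge> 2"
  proof -
    have "1 * 2 \<le> real D * real Delta" using D De by (intro mult_mono) auto
    thus ?thesis by simp
  qed
  have lnDD: "ln (real D * real Delta) \<ge> ln 2" using DD by (subst ln_le_cancel_iff) auto
  have lnsplit: "ln (real D * real Delta) = ln (real D) + ln (real Delta)"
    using D De by (simp add: ln_mult)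
  have "2 * ln 2 / L \<ge> 2" using L0 L2 by (simp add: field_simps)
  moreover have "2 * ln (real D * real Delta) / L \<ge> 2 * ln 2 / L"
    using lnDD L0 by (intro divide_right_mono) auto
  ultimately have x2: "x \<ge> 2" unfolding x_def by linarith
  have nx: "real (nm D Delta) = real_of_int \<lceil>x\<rceil>"
    unfolding nm_def x_def L_def d_def using x2 unfolding x_def L_def d_def by simp
  have nge: "real (nm D Delta) \<ge> x" using nx le_of_int_ceiling[of x] by linarith
  hence "real (nm D Delta) \<ge> 1" using x2 by linarith
  thus "nm D Delta \<ge> 1" by simp
  have "real (nm D Delta) \<le> x + 1" using nx ceiling_correct[of x] by linarith
  also have "\<dots> \<le> 3/2 * x" using x2 by simp
  also have "\<dots> = 3 * (ln (real D) + ln (real Delta)) / ln (1 / delta Delta)"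
    unfolding x_def L_def d_def lnsplit using L0 unfolding L_def d_def by (simp add: field_simps)
  finally show "real (nm D Delta) \<le> 3 * (ln (real D) + ln (real Delta)) / ln (1 / delta Delta)" .
  have lnd: "ln d = - L" unfolding L_def using d1 by (simp add: ln_div)
  have "ln (d ^ nm D Delta) = real (nm D Delta) * ln d" using d1 by (simp add: ln_realpow)
  also have "\<dots> \<le> x * ln d" using nge lnd L0 by (intro mult_right_mono_neg) auto
  also have "\<dots> = - 2 * ln (real D * real Delta)" unfolding x_def lnd using L0 by simp
  also have "\<dots> = ln (1 / (real D * real Delta)^2)" using DD D De by (simp add: ln_div ln_realpow)
  finally have "d ^ nm D Delta \<le> 1 / (real D * real Delta)^2"
    using d1 DD D De by (subst (asm) ln_le_cancel_iff) auto
  hence "2 * real Delta * d ^ nm D Delta \<le> 2 * real Delta * (1 / (real D * real Delta)^2)"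
    using De by (intro mult_left_mono) auto
  also have "\<dots> = (2 / real Delta) * (1 / (real D)^2)" using De by (simp add: field_simps power2_eq_square)
  also have "\<dots> \<le> 1 * (1 / (real D)^2)" using De by (intro mult_right_mono) auto
  finally show "2 * real Delta * delta Delta ^ nm D Delta \<le> 1 / (real D)^2" unfolding d_def by simp
qed

lemma pmf_bind_ge: "pmf (bind_pmf W f) y \<ge> pmf W x * pmf (f x) y"
proof -
  have "ennreal (pmf W x * pmf (f x) y) = (\<integral>\<^sup>+z. ennreal (pmf (f x) y) * indicator {x} z \<partial>measure_pmf W)"
    by (simp add: nn_integral_cmult_indicator emeasure_pmf_single ennreal_mult mult.commute)
  also have "\<dots> \<le> (\<integral>\<^sup>+z. ennreal (pmf (f z) y) \<partial>measure_pmf W)"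
    by (intro nn_integral_mono) (auto split: split_indicator)
  also have "\<dots> = ennreal (pmf (bind_pmf W f) y)" by (simp add: ennreal_pmf_bind)
  finally show ?thesis by (simp add: ennreal_le_iff)
qed

lemma walk_lower:
  assumes "\<forall>i<D. pmf (step (P ! i)) (P ! Suc i) \<ge> 1 - e"
  shows "i \<le> D \<Longrightarrow> pmf (walk_pmf step i (P ! 0)) (P ! i) \<ge> 1 - real i * e"
proof (induction i)
  case 0 thus ?case by simp
next
  case (Suc i)
  define a where "a = pmf (walk_pmf step i (P ! 0)) (P ! i)"
  define b where "b = pmf (step (P ! i)) (P ! Suc i)"
  have a: "a \<ge> 1 - real i * e" using Suc unfolding a_def by simp
  have b: "b \<ge> 1 - e" using assms Suc unfolding b_def by simp
  have "pmf (walk_pmf step (Suc i) (P ! 0)) (P ! Suc i) \<ge> a * b"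
    unfolding a_def b_def by (simp add: pmf_bind_ge)
  moreover have "a * b \<ge> a + b - 1"
  proof -
    have "(1 - a) * (1 - b) \<ge> 0" unfolding a_def b_def by (intro mult_nonneg_nonneg) (auto simp: pmf_le_1)
    thus ?thesis by (simp add: algebra_simps)
  qed
  ultimately show ?case using a b by (simp add: algebra_simps)
qed



lemma shortest_distinct:
  assumes sp: "shortest_path E s t P" shows "distinct P"
proof (rule ccontr)
  assume "\<not> distinct P"
  then obtain i j where ij: "i < j" "j < length P" "P ! i = P ! j"
    by (metis distinct_conv_nth linorder_neqE_nat)
  have w: "is_walk E P" and hP: "hd P = s" and lP: "last P = t"
    and len: "length P = Suc (graph_dist E s t)" using sp unfolding shortest_path_def by auto
  define l where "l = length P - (j - i)"
  define Q where "Q = map (\<lambda>m. if m \<le> i then P ! m else P ! (m + (j - i))) [0..<l]"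
  have lQ: "length Q = l" unfolding Q_def by simp
  have l1: "i < l" unfolding l_def using ij by linarith
  have Qn: "Q ! m = (if m \<le> i then P ! m else P ! (m + (j - i)))" if "m < l" for m
    unfolding Q_def using that by simp
  have edge: "E (P ! m) (P ! Suc m)" if "Suc m < length P" for m
    using w that unfolding is_walk_def by auto
  have "is_walk E Q"
    unfolding is_walk_def
  proof (intro conjI allI impI)
    show "Q \<noteq> []" using lQ l1 by auto
    fix m assume m: "Suc m < length Q"
    show "E (Q ! m) (Q ! Suc m)"
    proof (cases "Suc m \<le> i")
      case True thus ?thesis using m lQ Qn edge ij by auto
    next
      case False
      show ?thesis
      proof (cases "m = i")
        case True
        have "Q ! m = P ! j" using True Qn m lQ ij by auto
        moreover have "Q ! Suc m = P ! Suc j" using True Qn[of "Suc m"] m lQ ij by auto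
        moreover have "Suc j < length P" using m lQ True l_def ij by linarith
        ultimately show ?thesis using edge by simp
      next
        case False
        hence "Q ! m = P ! (m + (j - i))" "Q ! Suc m = P ! Suc (m + (j - i))"
          using \<open>\<not> Suc m \<le> i\<close> Qn[of m] Qn[of "Suc m"] m lQ by auto
        moreover have "Suc (m + (j - i)) < length P" using m lQ l_def ij by linarith
        ultimately show ?thesis using edge by simp
      qed
    qed
  qed
  moreover have "hd Q = s"
  proof -
    have "Q \<noteq> []" "P \<noteq> []" using lQ l1 ij by auto
    thus ?thesis using hP l1 lQ Qn[of 0] by (simp add: hd_conv_nth)
  qed
  moreover have "last Q = t"
  proof -
    have "Q \<noteq> []" using lQ l1 by auto
    hence "last Q = Q ! (l - 1)" using lQ by (simp add: last_conv_nth)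
    also have "\<dots> = P ! (length P - 1)"
    proof (cases "l - 1 \<le> i")
      case True
      hence "l - 1 = i" "j = length P - 1" using l1 l_def ij by linarith+
      thus ?thesis using Qn[of "l - 1"] l1 ij by simp
    next
      case False
      thus ?thesis using Qn[of "l - 1"] l1 ij l_def by (simp add: algebra_simps)
    qed
    also have "\<dots> = t" using lP ij by (subst last_conv_nth[symmetric]) auto
    finally show ?thesis .
  qed
  ultimately have "\<exists>Q. is_walk E Q \<and> hd Q = s \<and> last Q = t \<and> length Q = Suc (l - 1)"
    using lQ l1 by (intro exI[of _ Q]) auto
  hence "graph_dist E s t \<le> l - 1" unfolding graph_dist_def by (rule Least_le)
  moreover have "l - 1 < graph_dist E s t" using len l_def ij by linarith
  ultimately show False by simp
qed



lemma graph_main: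
  fixes V :: "nat set"
  assumes sg: "simple_graph V E" and pn: "port_numbering V E port"
    and sV: "s \<in> V" and st: "s \<noteq> t" and ev: "even (max_degree V E)"
    and sp: "shortest_path E s t P"
  defines "Delta \<equiv> max_degree V E" and "D \<equiv> graph_dist E s t"
  defines "peb \<equiv> pebbles E port Delta P"
  shows "card {v. peb v \<noteq> None} = D \<and> {v. peb v \<noteq> None} \<subseteq> V \<and>
           pmf (walk_pmf (agent_step E port Delta (nm D Delta) peb) D s) t \<ge> 1 - 1 / real D"
proof -
  have w: "is_walk E P" and hP: "hd P = s" and lP: "last P = t"
    and len: "length P = Suc D" using sp unfolding shortest_path_def D_def by auto
  have dist: "distinct P" using shortest_distinct[OF sp] .
  have Pne: "P \<noteq> []" using len by auto
  have P0: "P ! 0 = s" using hP Pne by (simp add: hd_conv_nth)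
  have PD: "P ! D = t" using lP Pne len by (simp add: last_conv_nth)
  have D1: "D \<ge> 1" using P0 PD st by (cases D) auto
  have edge: "E (P ! i) (P ! Suc i)" if "i < D" for i
    using w that len unfolding is_walk_def by auto
  have EV: "u \<in> V \<and> v \<in> V" if "E u v" for u v using sg that unfolding simple_graph_def by blast
  have finV: "finite V" using sg unfolding simple_graph_def by blast
  have PV: "P ! i \<in> V" if "i \<le> D" for i
  proof (cases "i < D")
    case True thus ?thesis using EV edge by blast
  next
    case False
    hence "i = Suc (D - 1)" using that D1 by simp
    thus ?thesis using EV edge[of "D - 1"] D1 by auto
  qed
  have fin_nb: "finite {u. E v u}" for v
    by (rule finite_subset[OF _ finV]) (use EV in blast)
  have degle: "deg E v \<le> Delta" if "v \<in> V" for v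
    unfolding Delta_def max_degree_def using that finV by (intro Max_ge) auto
  have "deg E s \<ge> 1"
  proof -
    have "P ! 1 \<in> {u. E s u}" using edge[of 0] D1 P0 by simp
    hence "{u. E s u} \<noteq> {}" by blast
    thus ?thesis unfolding deg_def using fin_nb[of s] by (simp add: Suc_le_eq card_gt_0_iff)
  qed
  hence "Delta \<ge> 1" using degle[OF sV] by simp
  moreover have evD: "even Delta" using ev unfolding Delta_def .
  ultimately have De: "Delta \<ge> 2" by (auto elim!: evenE)
  define n where "n = nm D Delta"
  define e where "e = 2 * real Delta * delta Delta ^ n"
  have n1: "n \<ge> 1" and ebound: "e \<le> 1 / (real D)^2"
    using nm_props[OF D1 De] unfolding n_def e_def by auto
  have butl: "set (butlast P) = {P ! i | i. i < D}"
  proof -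
    have "butlast P = take D P" using len by (simp add: butlast_conv_take)
    show ?thesis
    proof (intro equalityI subsetI)
      fix x assume "x \<in> set (butlast P)"
      then obtain i where "i < length (butlast P)" "butlast P ! i = x" by (auto simp: in_set_conv_nth)
      thus "x \<in> {P ! i | i. i < D}" using len by (auto simp: nth_butlast)
    next
      fix x assume "x \<in> {P ! i | i. i < D}"
      then obtain i where "i < D" "x = P ! i" by blast
      thus "x \<in> set (butlast P)" using len by (auto simp: in_set_conv_nth nth_butlast intro!: exI[of _ i])
    qed
  qed
  have pebset: "{v. peb v \<noteq> None} = set (butlast P)"
    unfolding peb_def pebbles_def by auto
  have card: "card {v. peb v \<noteq> None} = D"
    unfolding pebset using dist len by (simp add: distinct_card distinct_butlast)
  have sub: "{v. peb v \<noteq> None} \<subseteq> V" unfolding pebset butl using PV by auto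
  have step: "pmf (agent_step E port Delta n peb (P ! i)) (P ! Suc i) \<ge> 1 - e" if i: "i < D" for i
  proof -
    define v where "v = P ! i"
    define u where "u = P ! Suc i"
    have vV: "v \<in> V" unfolding v_def using PV i by simp
    have Evu: "E v u" unfolding v_def u_def using edge i by simp
    have bij: "bij_betw (port v) {1..deg E v} {u. E v u}" using pn vV unfolding port_numbering_def by blast
    have im: "port v ` {1..deg E v} = {u. E v u}" by (rule bij_betw_imp_surj_on[OF bij])
    have "u \<in> port v ` {1..deg E v}" using Evu im by simp
    then obtain p where p: "p \<in> {1..deg E v}" "port v p = u" by (auto elim!: imageE)
    have pof: "port_of E port v u = p"
      unfolding port_of_def
    proof (rule the_equality)
      show "p \<in> {1..deg E v} \<and> port v p = u" using p by simp
      fix p' assume "p' \<in> {1..deg E v} \<and> port v p' = u"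
      moreover have "inj_on (port v) {1..deg E v}" using bij unfolding bij_betw_def by blast
      ultimately show "p' = p" using p by (auto dest: inj_onD)
    qed
    have theI: "(THE i'. Suc i' < length P \<and> P ! i' = v) = i"
    proof (rule the_equality)
      show "Suc i < length P \<and> P ! i = v" using i len v_def by simp
      fix i' assume "Suc i' < length P \<and> P ! i' = v"
      hence "i' < length P" "P ! i' = P ! i" unfolding v_def by auto
      thus "i' = i" using dist i len nth_eq_iff_index_eq[of P i' i] by simp
    qed
    have vin: "v \<in> set (butlast P)" unfolding butl v_def using i by blast
    have pebv: "peb v = Some (f_state Delta p)"
      unfolding peb_def pebbles_def using vin theI pof u_def by simp
    have pD: "1 \<le> p" "p \<le> Delta" using p degle[OF vV] by auto
    have "pmf (agent_step E port Delta n peb v) u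
        = measure_pmf.prob (agent_choice Delta n (f_state Delta p))
            ((\<lambda>p. if 1 \<le> p \<and> p \<le> deg E v then port v p else v) -` {u})"
      unfolding agent_step_def pebv by (simp add: pmf_map)
    also have "\<dots> \<ge> measure_pmf.prob (agent_choice Delta n (f_state Delta p)) {p}"
      using p by (intro measure_pmf.finite_measure_mono) auto
    finally have "pmf (agent_step E port Delta n peb v) u \<ge> pmf (agent_choice Delta n (f_state Delta p)) p"
      by (simp add: measure_pmf_single)
    moreover have "pmf (agent_choice Delta n (f_state Delta p)) p \<ge> 1 - e"
      unfolding e_def using choice_bound[OF evD De pD n1] .
    ultimately show ?thesis unfolding u_def v_def by simp
  qed
  have "pmf (walk_pmf (agent_step E port Delta n peb) D (P ! 0)) (P ! D) \<ge> 1 - real D * e"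
    using walk_lower[where D=D and step="agent_step E port Delta n peb" and P=P and e=e and i=D] step by auto
  moreover have "real D * e \<le> 1 / real D"
  proof -
    have "real D * e \<le> real D * (1 / (real D)^2)" using ebound by (intro mult_left_mono) auto
    also have "\<dots> = 1 / real D" by (simp add: power2_eq_square)
    finally show ?thesis .
  qed
  ultimately have "pmf (walk_pmf (agent_step E port Delta n peb) D s) t \<ge> 1 - 1 / real D"
    using P0 PD by simp
  thus ?thesis using card sub unfolding n_def by simp
qed

theorem theorem9:
  "\<exists>(C::real) (nmeas :: nat \<Rightarrow> nat \<Rightarrow> nat) (g :: nat \<Rightarrow> real).
     g \<longlonglongrightarrow> 0 \<and>
     (\<forall>D Delta. D \<ge> 1 \<longrightarrow> Delta \<ge> 2 \<longrightarrow>
        real (nmeas D Delta) \<le> C * (ln (real D) + ln (real Delta)) / ln (1 / delta Delta)) \<and>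
     (\<forall>(V :: nat set) E port s t P.
        simple_graph V E \<and> connected_graph V E \<and> port_numbering V E port \<and>
        s \<in> V \<and> t \<in> V \<and> s \<noteq> t \<and> even (max_degree V E) \<and> shortest_path E s t P \<longrightarrow>
        (let Delta = max_degree V E; D = graph_dist E s t; peb = pebbles E port Delta P in
           card {v. peb v \<noteq> None} = D \<and> {v. peb v \<noteq> None} \<subseteq> V \<and>
           pmf (walk_pmf (agent_step E port Delta (nmeas D Delta) peb) D s) t \<ge> 1 - g D))"
proof (intro exI conjI allI impI)
  show "(\<lambda>D. 1 / real D) \<longlonglongrightarrow> 0" using lim_inverse_n' by (simp add: inverse_eq_divide)
next
  fix D Delta :: nat assume "D \<ge> 1" "Delta \<ge> 2"
  thus "real (nm D Delta) \<le> 3 * (ln (real D) + ln (real Delta)) / ln (1 / delta Delta)"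
    by (rule nm_props)
next
  fix V :: "nat set" and E port s t P
  assume h: "simple_graph V E \<and> connected_graph V E \<and> port_numbering V E port \<and>
        s \<in> V \<and> t \<in> V \<and> s \<noteq> t \<and> even (max_degree V E) \<and> shortest_path E s t P"
  show "let Delta = max_degree V E; D = graph_dist E s t; peb = pebbles E port Delta P in
           card {v. peb v \<noteq> None} = D \<and> {v. peb v \<noteq> None} \<subseteq> V \<and>
           pmf (walk_pmf (agent_step E port Delta (nm D Delta) peb) D s) t \<ge> 1 - 1 / real D"
    unfolding Let_def
    by (rule graph_main) (use h in auto)
qed

end
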